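(* Let $\mathcal{C}$ be an additive category and $n\geq 1$ an integer. Suppose given a commutative diagram in $\mathcal{C}$ $$\begin{array}{ccccccccccc} A_0 & \xrightarrow{f_0} & A_1 & \xrightarrow{f_1} & A_2 & \xrightarrow{f_2} & \cdots & \xrightarrow{f_{n-1}} & A_n & \xrightarrow{f_n} & A_{n+1}\\ \| & & \downarrow{\scriptstyle h_1} & & \downarrow{\scriptstyle h_2} & & & & \downarrow{\scriptstyle h_n} & & \downarrow{\scriptstyle h_{n+1}}\\ A_0 & \xrightarrow{g_0} & B_1 & \xrightarrow{g_1} & B_2 & \xrightarrow{g_2} & \cdots & \xrightarrow{g_{n-1}} & B_n & \xrightarrow{g_n} & B_{n+1} \end{array}$$ (the leftmost vertical map is $1_{A_0}$, and all squares commute: $g_0=h_1f_0$ and $h_{i+1}f_i=g_ih_i$ for $1\le i\le n$) whose two rows are right $n$-exact sequences. Then the sequence $$A_1\xrightarrow{d_0} A_2\oplus B_1\xrightarrow{d_1} A_3\oplus B_2\xrightarrow{d_2}\cdots\xrightarrow{d_{n-1}}A_{n+1}\oplus B_{n}\xrightarrow{d_{n}}B_{n+1}$$ is right $n$-exact, where $d_0=\begin{pmatrix}-f_1\\ h_1\end{pmatrix}$, $d_i=\begin{pmatrix}-f_{i+1} & 0\\ h_{i+1} & g_i\end{pmatrix}$ for $i=1,\dots,n-1$, and $d_n=(h_{n+1}\ \ g_n)$. (In other words, the diagram obtained by deleting the first column is an $n$-pushout diagram.)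
   Context: Let $f:A\to B$ be a morphism in an additive category. A weak cokernel of $f$ is a morphism $g:B\to C$ with $gf=0$ such that for every $h:B\to D$ with $hf=0$ there exists a (not necessarily unique) $k:C\to D$ with $h=kg$. For a positive integer $n$, a sequence $A_0\xrightarrow{f_0}A_1\xrightarrow{f_1}\cdots\xrightarrow{f_n}A_{n+1}$ is called right $n$-exact (and $(f_1,\dots,f_n)$ is called an $n$-cokernel of $f_0$) if for each $k=1,\dots,n-1$ the morphism $f_k$ is a weak cokernel of $f_{k-1}$, and $f_n$ is a cokernel of $f_{n-1}$. *)

theory Defs
  imports Main
begin

record ('o, 'm) cat =
  Obj  :: "'o set"
  Mor  :: "'m set"
  Dom  :: "'m \<Rightarrow> 'o"
  Cod  :: "'m \<Rightarrow> 'o"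
  Comp :: "'m \<Rightarrow> 'm \<Rightarrow> 'm"      \<comment> \<open>Comp C g f = g after f\<close>
  Id   :: "'o \<Rightarrow> 'm"
  Plus :: "'m \<Rightarrow> 'm \<Rightarrow> 'm"
  Neg  :: "'m \<Rightarrow> 'm"
  Zero :: "'o \<Rightarrow> 'o \<Rightarrow> 'm"      \<comment> \<open>zero morphism a \<rightarrow> b\<close>

definition Hom :: "('o, 'm, 'x) cat_scheme \<Rightarrow> 'o \<Rightarrow> 'o \<Rightarrow> 'm set" where
  "Hom C a b = {f \<in> Mor C. Dom C f = a \<and> Cod C f = b}"

definition is_biproduct ::
  "('o, 'm, 'x) cat_scheme \<Rightarrow> 'o \<Rightarrow> 'o \<Rightarrow> 'o \<Rightarrow> 'm \<Rightarrow> 'm \<Rightarrow> 'm \<Rightarrow> 'm \<Rightarrow> bool" where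
  "is_biproduct C a b s p1 p2 i1 i2 \<longleftrightarrow>
     s \<in> Obj C \<and>
     p1 \<in> Hom C s a \<and> p2 \<in> Hom C s b \<and> i1 \<in> Hom C a s \<and> i2 \<in> Hom C b s \<and>
     Comp C p1 i1 = Id C a \<and> Comp C p2 i2 = Id C b \<and>
     Comp C p1 i2 = Zero C b a \<and> Comp C p2 i1 = Zero C a b \<and>
     Plus C (Comp C i1 p1) (Comp C i2 p2) = Id C s"

definition additive_category :: "('o, 'm, 'x) cat_scheme \<Rightarrow> bool" where
  "additive_category C \<longleftrightarrow>
     \<comment> \<open>category axioms\<close>
     (\<forall>f \<in> Mor C. Dom C f \<in> Obj C \<and> Cod C f \<in> Obj C) \<and>
     (\<forall>a \<in> Obj C. Id C a \<in> Hom C a a) \<and>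
     (\<forall>a \<in> Obj C. \<forall>b \<in> Obj C. \<forall>c \<in> Obj C. \<forall>f \<in> Hom C a b. \<forall>g \<in> Hom C b c.
        Comp C g f \<in> Hom C a c) \<and>
     (\<forall>a \<in> Obj C. \<forall>b \<in> Obj C. \<forall>f \<in> Hom C a b.
        Comp C (Id C b) f = f \<and> Comp C f (Id C a) = f) \<and>
     (\<forall>a \<in> Obj C. \<forall>b \<in> Obj C. \<forall>c \<in> Obj C. \<forall>d \<in> Obj C.
        \<forall>f \<in> Hom C a b. \<forall>g \<in> Hom C b c. \<forall>h \<in> Hom C c d.
        Comp C h (Comp C g f) = Comp C (Comp C h g) f) \<and>
     \<comment> \<open>each hom-set is an abelian group\<close>
     (\<forall>a \<in> Obj C. \<forall>b \<in> Obj C.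
        Zero C a b \<in> Hom C a b \<and>
        (\<forall>f \<in> Hom C a b. \<forall>g \<in> Hom C a b. Plus C f g \<in> Hom C a b) \<and>
        (\<forall>f \<in> Hom C a b. Neg C f \<in> Hom C a b) \<and>
        (\<forall>f \<in> Hom C a b. \<forall>g \<in> Hom C a b. \<forall>h \<in> Hom C a b.
           Plus C (Plus C f g) h = Plus C f (Plus C g h)) \<and>
        (\<forall>f \<in> Hom C a b. \<forall>g \<in> Hom C a b. Plus C f g = Plus C g f) \<and>
        (\<forall>f \<in> Hom C a b. Plus C f (Zero C a b) = f) \<and>
        (\<forall>f \<in> Hom C a b. Plus C f (Neg C f) = Zero C a b)) \<and>
     \<comment> \<open>composition is bilinear\<close>
     (\<forall>a \<in> Obj C. \<forall>b \<in> Obj C. \<forall>c \<in> Obj C.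
        (\<forall>f \<in> Hom C a b. \<forall>g \<in> Hom C b c. \<forall>g' \<in> Hom C b c.
           Comp C (Plus C g g') f = Plus C (Comp C g f) (Comp C g' f)) \<and>
        (\<forall>f \<in> Hom C a b. \<forall>f' \<in> Hom C a b. \<forall>g \<in> Hom C b c.
           Comp C g (Plus C f f') = Plus C (Comp C g f) (Comp C g f'))) \<and>
     \<comment> \<open>zero object\<close>
     (\<exists>z \<in> Obj C. \<forall>a \<in> Obj C. Hom C z a = {Zero C z a} \<and> Hom C a z = {Zero C a z}) \<and>
     \<comment> \<open>binary biproducts\<close>
     (\<forall>a \<in> Obj C. \<forall>b \<in> Obj C. \<exists>s p1 p2 i1 i2. is_biproduct C a b s p1 p2 i1 i2)"

definition weak_cokernel :: "('o, 'm, 'x) cat_scheme \<Rightarrow> 'm \<Rightarrow> 'm \<Rightarrow> bool" where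
  "weak_cokernel C f g \<longleftrightarrow>
     f \<in> Mor C \<and> g \<in> Mor C \<and> Dom C g = Cod C f \<and>
     Comp C g f = Zero C (Dom C f) (Cod C g) \<and>
     (\<forall>D \<in> Obj C. \<forall>h \<in> Hom C (Cod C f) D. Comp C h f = Zero C (Dom C f) D \<longrightarrow>
        (\<exists>k \<in> Hom C (Cod C g) D. h = Comp C k g))"

definition cokernel :: "('o, 'm, 'x) cat_scheme \<Rightarrow> 'm \<Rightarrow> 'm \<Rightarrow> bool" where
  "cokernel C f g \<longleftrightarrow>
     f \<in> Mor C \<and> g \<in> Mor C \<and> Dom C g = Cod C f \<and>
     Comp C g f = Zero C (Dom C f) (Cod C g) \<and>
     (\<forall>D \<in> Obj C. \<forall>h \<in> Hom C (Cod C f) D. Comp C h f = Zero C (Dom C f) D \<longrightarrow>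
        (\<exists>!k. k \<in> Hom C (Cod C g) D \<and> h = Comp C k g))"

definition right_n_exact ::
  "('o, 'm, 'x) cat_scheme \<Rightarrow> nat \<Rightarrow> (nat \<Rightarrow> 'o) \<Rightarrow> (nat \<Rightarrow> 'm) \<Rightarrow> bool" where
  "right_n_exact C n X u \<longleftrightarrow>
     1 \<le> n \<and>
     (\<forall>k \<le> Suc n. X k \<in> Obj C) \<and>
     (\<forall>k \<le> n. u k \<in> Hom C (X k) (X (Suc k))) \<and>
     (\<forall>k. 1 \<le> k \<and> k < n \<longrightarrow> weak_cokernel C (u (k - 1)) (u k)) \<and>
     cokernel C (u (n - 1)) (u n)"

end

theory Submission
  imports Defs
begin


locale addcat = fixes C :: "('o, 'm, 'x) cat_scheme"
  assumes add: "additive_category C"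
begin

lemmas AX = add[unfolded additive_category_def]
lemmas AX1 = AX[THEN conjunct1]
lemmas AX2 = AX[THEN conjunct2, THEN conjunct1]
lemmas AX3 = AX[THEN conjunct2, THEN conjunct2, THEN conjunct1]
lemmas AX4 = AX[THEN conjunct2, THEN conjunct2, THEN conjunct2, THEN conjunct1]
lemmas AX5 = AX[THEN conjunct2, THEN conjunct2, THEN conjunct2, THEN conjunct2, THEN conjunct1]
lemmas AX6 = AX[THEN conjunct2, THEN conjunct2, THEN conjunct2, THEN conjunct2, THEN conjunct2, THEN conjunct1]
lemmas AX7 = AX[THEN conjunct2, THEN conjunct2, THEN conjunct2, THEN conjunct2, THEN conjunct2, THEN conjunct2, THEN conjunct1]

lemma hom_obj: "f \<in> Hom C a b \<Longrightarrow> a \<in> Obj C \<and> b \<in> Obj C"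
  using AX1 unfolding Hom_def by blast

lemma id_hom: "a \<in> Obj C \<Longrightarrow> cat.Id C a \<in> Hom C a a"
  using AX2 by blast

lemma comp_hom: "f \<in> Hom C a b \<Longrightarrow> g \<in> Hom C b c \<Longrightarrow> Comp C g f \<in> Hom C a c"
  using AX3 hom_obj by meson

lemma id_l: "f \<in> Hom C a b \<Longrightarrow> Comp C (cat.Id C b) f = f"
  using AX4 hom_obj by meson

lemma id_r: "f \<in> Hom C a b \<Longrightarrow> Comp C f (cat.Id C a) = f"
  using AX4 hom_obj by meson

lemma assoc: "f \<in> Hom C a b \<Longrightarrow> g \<in> Hom C b c \<Longrightarrow> k \<in> Hom C c d \<Longrightarrow>
   Comp C k (Comp C g f) = Comp C (Comp C k g) f"
  using AX5 hom_obj by meson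

lemma zero_hom: "a \<in> Obj C \<Longrightarrow> b \<in> Obj C \<Longrightarrow> Zero C a b \<in> Hom C a b"
  using AX6 by blast

lemma plus_hom: "f \<in> Hom C a b \<Longrightarrow> g \<in> Hom C a b \<Longrightarrow> Plus C f g \<in> Hom C a b"
  using AX6 hom_obj by meson

lemma neg_hom: "f \<in> Hom C a b \<Longrightarrow> Neg C f \<in> Hom C a b"
  using AX6 hom_obj by meson

lemma plus_assoc: "f \<in> Hom C a b \<Longrightarrow> g \<in> Hom C a b \<Longrightarrow> h \<in> Hom C a b \<Longrightarrow>
  Plus C (Plus C f g) h = Plus C f (Plus C g h)"
  using AX6 hom_obj by meson

lemma plus_comm: "f \<in> Hom C a b \<Longrightarrow> g \<in> Hom C a b \<Longrightarrow> Plus C f g = Plus C g f"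
  using AX6 hom_obj by meson

lemma plus_zero: "f \<in> Hom C a b \<Longrightarrow> Plus C f (Zero C a b) = f"
  using AX6 hom_obj by meson

lemma plus_neg: "f \<in> Hom C a b \<Longrightarrow> Plus C f (Neg C f) = Zero C a b"
  using AX6 hom_obj by meson

lemma comp_plus_l: "f \<in> Hom C a b \<Longrightarrow> g \<in> Hom C b c \<Longrightarrow> g' \<in> Hom C b c \<Longrightarrow>
  Comp C (Plus C g g') f = Plus C (Comp C g f) (Comp C g' f)"
  using AX7 hom_obj by meson

lemma comp_plus_r: "f \<in> Hom C a b \<Longrightarrow> f' \<in> Hom C a b \<Longrightarrow> g \<in> Hom C b c \<Longrightarrow>
  Comp C g (Plus C f f') = Plus C (Comp C g f) (Comp C g f')"
  using AX7 hom_obj by meson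

lemma zero_plus: "f \<in> Hom C a b \<Longrightarrow> Plus C (Zero C a b) f = f"
  by (metis hom_obj plus_comm plus_zero zero_hom)

lemma neg_unique: assumes x: "x \<in> Hom C a b" and y: "y \<in> Hom C a b" and s: "Plus C x y = Zero C a b"
  shows "y = Neg C x"
proof -
  have "y = Plus C y (Plus C x (Neg C x))" using x y by (simp add: plus_neg plus_zero)
  also have "\<dots> = Plus C (Plus C x y) (Neg C x)" using x y neg_hom plus_assoc plus_comm by metis
  also have "\<dots> = Neg C x" using s x by (simp add: zero_plus neg_hom)
  finally show ?thesis .
qed

lemma idem_zero: assumes x: "x \<in> Hom C a b" and s: "Plus C x x = x" shows "x = Zero C a b"
proof -
  have "Zero C a b = Plus C (Plus C x x) (Neg C x)" using s x by (simp add: plus_neg)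
  also have "\<dots> = x" using x by (simp add: plus_assoc neg_hom plus_neg plus_zero)
  finally show ?thesis by simp
qed

lemma comp_zero_l: assumes f: "f \<in> Hom C a b" and c: "c \<in> Obj C"
  shows "Comp C (Zero C b c) f = Zero C a c"
proof -
  have z: "Zero C b c \<in> Hom C b c" using f c hom_obj zero_hom by blast
  have "Comp C (Zero C b c) f = Comp C (Plus C (Zero C b c) (Zero C b c)) f"
    using z by (simp add: plus_zero)
  also have "\<dots> = Plus C (Comp C (Zero C b c) f) (Comp C (Zero C b c) f)"
    using f z comp_plus_l by blast
  finally show ?thesis using idem_zero comp_hom f z by metis
qed

lemma comp_zero_r: assumes g: "g \<in> Hom C b c" and a: "a \<in> Obj C"
  shows "Comp C g (Zero C a b) = Zero C a c"
proof -
  have z: "Zero C a b \<in> Hom C a b" using g a hom_obj zero_hom by blast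
  have "Comp C g (Zero C a b) = Comp C g (Plus C (Zero C a b) (Zero C a b))"
    using z by (simp add: plus_zero)
  also have "\<dots> = Plus C (Comp C g (Zero C a b)) (Comp C g (Zero C a b))"
    using g z comp_plus_r by blast
  finally show ?thesis using idem_zero comp_hom g z by metis
qed

lemma neg_comp_l: assumes f: "f \<in> Hom C a b" and g: "g \<in> Hom C b c"
  shows "Comp C (Neg C g) f = Neg C (Comp C g f)"
proof (rule neg_unique)
  show "Comp C g f \<in> Hom C a c" using f g comp_hom by blast
  show "Comp C (Neg C g) f \<in> Hom C a c" using f g comp_hom neg_hom by blast
  have "Plus C (Comp C g f) (Comp C (Neg C g) f) = Comp C (Plus C g (Neg C g)) f"
    using f g neg_hom comp_plus_l by metis
  also have "\<dots> = Zero C a c" using f g by (simp add: plus_neg comp_zero_l hom_obj)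
  finally show "Plus C (Comp C g f) (Comp C (Neg C g) f) = Zero C a c" .
qed

lemma neg_comp_r: assumes f: "f \<in> Hom C a b" and g: "g \<in> Hom C b c"
  shows "Comp C g (Neg C f) = Neg C (Comp C g f)"
proof (rule neg_unique)
  show "Comp C g f \<in> Hom C a c" using f g comp_hom by blast
  show "Comp C g (Neg C f) \<in> Hom C a c" using f g comp_hom neg_hom by blast
  have "Plus C (Comp C g f) (Comp C g (Neg C f)) = Comp C g (Plus C f (Neg C f))"
    using f g neg_hom comp_plus_r by metis
  also have "\<dots> = Zero C a c" using f g by (simp add: plus_neg comp_zero_r hom_obj)
  finally show "Plus C (Comp C g f) (Comp C g (Neg C f)) = Zero C a c" .
qed

lemma neg_neg: "x \<in> Hom C a b \<Longrightarrow> Neg C (Neg C x) = x"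
  by (metis neg_hom neg_unique plus_comm plus_neg)

lemma plus_neg_cancel: "x \<in> Hom C a b \<Longrightarrow> y \<in> Hom C a b \<Longrightarrow> Plus C (Plus C x (Neg C y)) y = x"
  by (metis neg_hom plus_assoc plus_comm plus_neg plus_zero)

lemma neg_neg_comp: "f \<in> Hom C a b \<Longrightarrow> g \<in> Hom C b c \<Longrightarrow>
   Comp C (Neg C g) (Neg C f) = Comp C g f"
  by (metis comp_hom neg_comp_l neg_comp_r neg_hom neg_neg)


context
  fixes a b s p1 p2 i1 i2
  assumes bp: "is_biproduct C a b s p1 p2 i1 i2"
begin

lemma bp_homs: "s \<in> Obj C" "p1 \<in> Hom C s a" "p2 \<in> Hom C s b" "i1 \<in> Hom C a s" "i2 \<in> Hom C b s"
  "a \<in> Obj C" "b \<in> Obj C"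
  using bp hom_obj unfolding is_biproduct_def by blast+

lemma bp_eqs: "Comp C p1 i1 = cat.Id C a" "Comp C p2 i2 = cat.Id C b"
  "Comp C p1 i2 = Zero C b a" "Comp C p2 i1 = Zero C a b"
  "Plus C (Comp C i1 p1) (Comp C i2 p2) = cat.Id C s"
  using bp unfolding is_biproduct_def by blast+

lemma bp_decomp_r: assumes x: "x \<in> Hom C d s"
  shows "x = Plus C (Comp C i1 (Comp C p1 x)) (Comp C i2 (Comp C p2 x))"
proof -
  have "x = Comp C (cat.Id C s) x" using x id_l by metis
  also have "\<dots> = Comp C (Plus C (Comp C i1 p1) (Comp C i2 p2)) x" using bp_eqs by simp
  also have "\<dots> = Plus C (Comp C (Comp C i1 p1) x) (Comp C (Comp C i2 p2) x)"
    using x bp_homs comp_hom comp_plus_l by meson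
  also have "\<dots> = Plus C (Comp C i1 (Comp C p1 x)) (Comp C i2 (Comp C p2 x))"
    using assoc[OF x bp_homs(2) bp_homs(4)] assoc[OF x bp_homs(3) bp_homs(5)] by simp
  finally show ?thesis .
qed

lemma bp_decomp_l: assumes x: "x \<in> Hom C s d"
  shows "x = Plus C (Comp C (Comp C x i1) p1) (Comp C (Comp C x i2) p2)"
proof -
  have "x = Comp C x (cat.Id C s)" using x id_r by metis
  also have "\<dots> = Comp C x (Plus C (Comp C i1 p1) (Comp C i2 p2))" using bp_eqs by simp
  also have "\<dots> = Plus C (Comp C x (Comp C i1 p1)) (Comp C x (Comp C i2 p2))"
    using x bp_homs comp_hom comp_plus_r by meson
  also have "\<dots> = Plus C (Comp C (Comp C x i1) p1) (Comp C (Comp C x i2) p2)"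
    using assoc[OF bp_homs(2) bp_homs(4) x] assoc[OF bp_homs(3) bp_homs(5) x] by simp
  finally show ?thesis .
qed

lemma bp_ext_r: "x \<in> Hom C d s \<Longrightarrow> y \<in> Hom C d s \<Longrightarrow> Comp C p1 x = Comp C p1 y \<Longrightarrow>
   Comp C p2 x = Comp C p2 y \<Longrightarrow> x = y"
  by (metis bp_decomp_r)

lemma bp_ext_l: "x \<in> Hom C s d \<Longrightarrow> y \<in> Hom C s d \<Longrightarrow> Comp C x i1 = Comp C y i1 \<Longrightarrow>
   Comp C x i2 = Comp C y i2 \<Longrightarrow> x = y"
  by (metis bp_decomp_l)

lemma bp_p_sum: assumes u: "u \<in> Hom C c a" and t: "t \<in> Hom C c b"
  shows "Comp C p1 (Plus C (Comp C i1 u) (Comp C i2 t)) = u"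
    "Comp C p2 (Plus C (Comp C i1 u) (Comp C i2 t)) = t"
proof -
  have h: "Comp C i1 u \<in> Hom C c s" "Comp C i2 t \<in> Hom C c s" using u t bp_homs comp_hom by blast+
  have "Comp C p1 (Plus C (Comp C i1 u) (Comp C i2 t)) = Plus C (Comp C p1 (Comp C i1 u)) (Comp C p1 (Comp C i2 t))"
    using h bp_homs comp_plus_r by blast
  also have "\<dots> = Plus C (Comp C (Comp C p1 i1) u) (Comp C (Comp C p1 i2) t)"
    using assoc[OF u bp_homs(4) bp_homs(2)] assoc[OF t bp_homs(5) bp_homs(2)] by simp
  also have "\<dots> = Plus C u (Zero C c a)"
    using u t bp_homs bp_eqs by (simp add: id_l comp_zero_l)
  also have "\<dots> = u" using u plus_zero by blast
  finally show "Comp C p1 (Plus C (Comp C i1 u) (Comp C i2 t)) = u" .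
  have "Comp C p2 (Plus C (Comp C i1 u) (Comp C i2 t)) = Plus C (Comp C p2 (Comp C i1 u)) (Comp C p2 (Comp C i2 t))"
    using h bp_homs comp_plus_r by blast
  also have "\<dots> = Plus C (Comp C (Comp C p2 i1) u) (Comp C (Comp C p2 i2) t)"
    using assoc[OF u bp_homs(4) bp_homs(3)] assoc[OF t bp_homs(5) bp_homs(3)] by simp
  also have "\<dots> = Plus C (Zero C c b) t"
    using u t bp_homs bp_eqs by (simp add: id_l comp_zero_l)
  also have "\<dots> = t" using t zero_plus by blast
  finally show "Comp C p2 (Plus C (Comp C i1 u) (Comp C i2 t)) = t" .
qed

lemma bp_sum_i: assumes x: "x \<in> Hom C a d" and y: "y \<in> Hom C b d"
  shows "Comp C (Plus C (Comp C x p1) (Comp C y p2)) i1 = x"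
    "Comp C (Plus C (Comp C x p1) (Comp C y p2)) i2 = y"
proof -
  have h: "Comp C x p1 \<in> Hom C s d" "Comp C y p2 \<in> Hom C s d" using x y bp_homs comp_hom by blast+
  have "Comp C (Plus C (Comp C x p1) (Comp C y p2)) i1 = Plus C (Comp C (Comp C x p1) i1) (Comp C (Comp C y p2) i1)"
    using h bp_homs comp_plus_l by blast
  also have "\<dots> = Plus C (Comp C x (Comp C p1 i1)) (Comp C y (Comp C p2 i1))"
    using assoc[OF bp_homs(4) bp_homs(2) x] assoc[OF bp_homs(4) bp_homs(3) y] by simp
  also have "\<dots> = Plus C x (Zero C a d)"
    using x y bp_homs bp_eqs by (simp add: id_r comp_zero_r)
  also have "\<dots> = x" using x plus_zero by blast
  finally show "Comp C (Plus C (Comp C x p1) (Comp C y p2)) i1 = x" .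
  have "Comp C (Plus C (Comp C x p1) (Comp C y p2)) i2 = Plus C (Comp C (Comp C x p1) i2) (Comp C (Comp C y p2) i2)"
    using h bp_homs comp_plus_l by blast
  also have "\<dots> = Plus C (Comp C x (Comp C p1 i2)) (Comp C y (Comp C p2 i2))"
    using assoc[OF bp_homs(5) bp_homs(2) x] assoc[OF bp_homs(5) bp_homs(3) y] by simp
  also have "\<dots> = Plus C (Zero C b d) y"
    using x y bp_homs bp_eqs by (simp add: id_r comp_zero_r)
  also have "\<dots> = y" using y zero_plus by blast
  finally show "Comp C (Plus C (Comp C x p1) (Comp C y p2)) i2 = y" .
qed

lemma bp_phi_sum: assumes ph: "\<phi> \<in> Hom C s d" and u: "u \<in> Hom C c a" and t: "t \<in> Hom C c b"
  shows "Comp C \<phi> (Plus C (Comp C i1 u) (Comp C i2 t)) = Plus C (Comp C (Comp C \<phi> i1) u) (Comp C (Comp C \<phi> i2) t)"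
proof -
  have h: "Comp C i1 u \<in> Hom C c s" "Comp C i2 t \<in> Hom C c s" using u t bp_homs comp_hom by blast+
  show ?thesis using comp_plus_r[OF h ph] assoc[OF u bp_homs(4) ph] assoc[OF t bp_homs(5) ph] by simp
qed

lemma bp_sum_x: assumes x: "x \<in> Hom C a d" and y: "y \<in> Hom C b d" and z: "z \<in> Hom C c s"
  shows "Comp C (Plus C (Comp C x p1) (Comp C y p2)) z = Plus C (Comp C x (Comp C p1 z)) (Comp C y (Comp C p2 z))"
proof -
  have h: "Comp C x p1 \<in> Hom C s d" "Comp C y p2 \<in> Hom C s d" using x y bp_homs comp_hom by blast+
  show ?thesis using comp_plus_l[OF z h] assoc[OF z bp_homs(2) x] assoc[OF z bp_homs(3) y] by simp
qed

end
end

theorem lemma2p7: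
  fixes C :: "('o, 'm, 'x) cat_scheme"
    and n :: nat
    and A B S :: "nat \<Rightarrow> 'o"
    and f g h p1 p2 i1 i2 :: "nat \<Rightarrow> 'm"
  assumes add: "additive_category C"
    and n: "1 \<le> n"
    and top: "right_n_exact C n A f"
    and bot: "right_n_exact C n (\<lambda>k. if k = 0 then A 0 else B k) g"
    and h_hom: "\<And>k. 1 \<le> k \<Longrightarrow> k \<le> Suc n \<Longrightarrow> h k \<in> Hom C (A k) (B k)"
    and sq0: "g 0 = Comp C (h 1) (f 0)"
    and sq: "\<And>i. 1 \<le> i \<Longrightarrow> i \<le> n \<Longrightarrow> Comp C (h (Suc i)) (f i) = Comp C (g i) (h i)"
    and bip: "\<And>i. 1 \<le> i \<Longrightarrow> i \<le> n \<Longrightarrow>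
                 is_biproduct C (A (Suc i)) (B i) (S i) (p1 i) (p2 i) (i1 i) (i2 i)"
  shows "right_n_exact C n
           (\<lambda>k. if k = 0 then A 1 else if k \<le> n then S k else B (Suc n))
           (\<lambda>k. if k = 0 then
                   Plus C (Comp C (i1 1) (Neg C (f 1))) (Comp C (i2 1) (h 1))
                 else if k < n then
                   Plus C (Comp C (i1 (Suc k)) (Comp C (Neg C (f (Suc k))) (p1 k)))
                          (Comp C (i2 (Suc k))
                             (Plus C (Comp C (h (Suc k)) (p1 k)) (Comp C (g k) (p2 k))))
                 else
                   Plus C (Comp C (h (Suc n)) (p1 n)) (Comp C (g n) (p2 n)))"
proof -
  interpret addcat C by (rule addcat.intro[OF add])
  define X where "X = (\<lambda>k. if k = 0 then A 1 else if k \<le> n then S k else B (Suc n))"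
  define u where "u = (\<lambda>k. if k = 0 then
                   Plus C (Comp C (i1 1) (Neg C (f 1))) (Comp C (i2 1) (h 1))
                 else if k < n then
                   Plus C (Comp C (i1 (Suc k)) (Comp C (Neg C (f (Suc k))) (p1 k)))
                          (Comp C (i2 (Suc k))
                             (Plus C (Comp C (h (Suc k)) (p1 k)) (Comp C (g k) (p2 k))))
                 else
                   Plus C (Comp C (h (Suc n)) (p1 n)) (Comp C (g n) (p2 n)))"
  define Y where "Y = (\<lambda>k. if k = 0 then A 0 else B k)"
  define W where "W = (\<lambda>k. Plus C (Comp C (i1 k) (Neg C (f k))) (Comp C (i2 k) (h k)))"
  have Aobj: "\<And>k. k \<le> Suc n \<Longrightarrow> A k \<in> Obj C" using top unfolding right_n_exact_def by blast
  have fh: "\<And>k. k \<le> n \<Longrightarrow> f k \<in> Hom C (A k) (A (Suc k))" using top unfolding right_n_exact_def by blast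
  have fwc: "\<And>k. 1 \<le> k \<Longrightarrow> k < n \<Longrightarrow> weak_cokernel C (f (k - 1)) (f k)"
    using top unfolding right_n_exact_def by blast
  have fck: "cokernel C (f (n - 1)) (f n)" using top unfolding right_n_exact_def by blast
  have Yobj: "\<And>k. k \<le> Suc n \<Longrightarrow> Y k \<in> Obj C" using bot unfolding right_n_exact_def Y_def by blast
  have gh: "\<And>k. k \<le> n \<Longrightarrow> g k \<in> Hom C (Y k) (B (Suc k))" using bot unfolding right_n_exact_def Y_def by auto
  have gwc: "\<And>k. 1 \<le> k \<Longrightarrow> k < n \<Longrightarrow> weak_cokernel C (g (k - 1)) (g k)"
    using bot unfolding right_n_exact_def by blast
  have gck: "cokernel C (g (n - 1)) (g n)" using bot unfolding right_n_exact_def by blast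
  have Bobj: "\<And>k. 1 \<le> k \<Longrightarrow> k \<le> Suc n \<Longrightarrow> B k \<in> Obj C" using Yobj unfolding Y_def
    by (metis not_one_le_zero)
  have ghk: "\<And>k. 1 \<le> k \<Longrightarrow> k \<le> n \<Longrightarrow> g k \<in> Hom C (B k) (B (Suc k))" using gh unfolding Y_def
    by (metis not_one_le_zero)
  have Sobj: "\<And>k. 1 \<le> k \<Longrightarrow> k \<le> n \<Longrightarrow> S k \<in> Obj C" using bip bp_homs by blast
  have Xobj: "\<And>k. k \<le> Suc n \<Longrightarrow> X k \<in> Obj C" unfolding X_def using Aobj Sobj Bobj n by auto

  have facT: "\<And>k D y. 1 \<le> k \<Longrightarrow> k \<le> n \<Longrightarrow> y \<in> Hom C (A k) D \<Longrightarrow>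
      Comp C y (f (k - 1)) = Zero C (A (k - 1)) D \<Longrightarrow> \<exists>e \<in> Hom C (A (Suc k)) D. y = Comp C e (f k)"
  proof -
    fix k D y assume k: "1 \<le> k" "k \<le> n" and y: "y \<in> Hom C (A k) D" and z: "Comp C y (f (k - 1)) = Zero C (A (k - 1)) D"
    have D: "D \<in> Obj C" using y hom_obj by blast
    have f1: "f (k - 1) \<in> Hom C (A (k - 1)) (A k)" using fh[of "k - 1"] k by simp
    have f2: "f k \<in> Hom C (A k) (A (Suc k))" using fh k by simp
    have c: "Cod C (f (k - 1)) = A k" "Dom C (f (k - 1)) = A (k - 1)" "Cod C (f k) = A (Suc k)"
      using f1 f2 unfolding Hom_def by auto
    show "\<exists>e \<in> Hom C (A (Suc k)) D. y = Comp C e (f k)"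
    proof (cases "k < n")
      case True
      then show ?thesis using fwc[OF k(1) True] D y z c unfolding weak_cokernel_def by auto
    next
      case False
      then have "k = n" using k by simp
      have "\<forall>D\<in>Obj C. \<forall>h\<in>Hom C (Cod C (f (n - 1))) D. Comp C h (f (n - 1)) = Zero C (Dom C (f (n - 1))) D \<longrightarrow>
        (\<exists>!k. k \<in> Hom C (Cod C (f n)) D \<and> h = Comp C k (f n))" using fck unfolding cokernel_def by blast
      then have "\<exists>!e. e \<in> Hom C (Cod C (f n)) D \<and> y = Comp C e (f n)" using D y z c `k = n` by auto
      then show ?thesis using c `k = n` by (auto dest!: ex1_implies_ex)
    qed
  qed
  have facB: "\<And>k D y. 1 \<le> k \<Longrightarrow> k \<le> n \<Longrightarrow> y \<in> Hom C (B k) D \<Longrightarrow>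
      Comp C y (g (k - 1)) = Zero C (Y (k - 1)) D \<Longrightarrow> \<exists>e \<in> Hom C (B (Suc k)) D. y = Comp C e (g k)"
  proof -
    fix k D y assume k: "1 \<le> k" "k \<le> n" and y: "y \<in> Hom C (B k) D" and z: "Comp C y (g (k - 1)) = Zero C (Y (k - 1)) D"
    have D: "D \<in> Obj C" using y hom_obj by blast
    have f1: "g (k - 1) \<in> Hom C (Y (k - 1)) (B k)" using gh[of "k - 1"] k by simp
    have f2: "g k \<in> Hom C (B k) (B (Suc k))" using ghk k by simp
    have c: "Cod C (g (k - 1)) = B k" "Dom C (g (k - 1)) = Y (k - 1)" "Cod C (g k) = B (Suc k)"
      using f1 f2 unfolding Hom_def by auto
    show "\<exists>e \<in> Hom C (B (Suc k)) D. y = Comp C e (g k)"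
    proof (cases "k < n")
      case True
      then show ?thesis using gwc[OF k(1) True] D y z c unfolding weak_cokernel_def by auto
    next
      case False
      then have "k = n" using k by simp
      have "\<forall>D\<in>Obj C. \<forall>h\<in>Hom C (Cod C (g (n - 1))) D. Comp C h (g (n - 1)) = Zero C (Dom C (g (n - 1))) D \<longrightarrow>
        (\<exists>!k. k \<in> Hom C (Cod C (g n)) D \<and> h = Comp C k (g n))" using gck unfolding cokernel_def by blast
      then have "\<exists>!e. e \<in> Hom C (Cod C (g n)) D \<and> y = Comp C e (g n)" using D y z c `k = n` by auto
      then show ?thesis using c `k = n` by (auto dest!: ex1_implies_ex)
    qed
  qed
  have ffz: "\<And>k. 1 \<le> k \<Longrightarrow> k \<le> n \<Longrightarrow> Comp C (f k) (f (k - 1)) = Zero C (A (k - 1)) (A (Suc k))"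
  proof -
    fix k assume k: "1 \<le> k" "k \<le> n"
    have f1: "f (k - 1) \<in> Hom C (A (k - 1)) (A k)" using fh[of "k - 1"] k by simp
    have f2: "f k \<in> Hom C (A k) (A (Suc k))" using fh k by simp
    have c: "Cod C (f (k - 1)) = A k" "Dom C (f (k - 1)) = A (k - 1)" "Cod C (f k) = A (Suc k)"
      using f1 f2 unfolding Hom_def by auto
    show "Comp C (f k) (f (k - 1)) = Zero C (A (k - 1)) (A (Suc k))"
    proof (cases "k < n")
      case True
      then show ?thesis using fwc[OF k(1) True] c unfolding weak_cokernel_def by auto
    next
      case False
      then have "k = n" using k by simp
      then show ?thesis using fck c unfolding cokernel_def by auto
    qed
  qed
  have ggz: "\<And>k. 1 \<le> k \<Longrightarrow> k \<le> n \<Longrightarrow> Comp C (g k) (g (k - 1)) = Zero C (Y (k - 1)) (B (Suc k))"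
  proof -
    fix k assume k: "1 \<le> k" "k \<le> n"
    have f1: "g (k - 1) \<in> Hom C (Y (k - 1)) (B k)" using gh[of "k - 1"] k by simp
    have f2: "g k \<in> Hom C (B k) (B (Suc k))" using ghk k by simp
    have c: "Cod C (g (k - 1)) = B k" "Dom C (g (k - 1)) = Y (k - 1)" "Cod C (g k) = B (Suc k)"
      using f1 f2 unfolding Hom_def by auto
    show "Comp C (g k) (g (k - 1)) = Zero C (Y (k - 1)) (B (Suc k))"
    proof (cases "k < n")
      case True
      then show ?thesis using gwc[OF k(1) True] c unfolding weak_cokernel_def by auto
    next
      case False
      then have "k = n" using k by simp
      then show ?thesis using gck c unfolding cokernel_def by auto
    qed
  qed
  have epiT: "\<And>D x y. x \<in> Hom C (A (Suc n)) D \<Longrightarrow> y \<in> Hom C (A (Suc n)) D \<Longrightarrow>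
      Comp C x (f n) = Comp C y (f n) \<Longrightarrow> x = y"
  proof -
    fix D x y assume x: "x \<in> Hom C (A (Suc n)) D" and y: "y \<in> Hom C (A (Suc n)) D"
      and e: "Comp C x (f n) = Comp C y (f n)"
    have D: "D \<in> Obj C" using y hom_obj by blast
    have f1: "f (n - 1) \<in> Hom C (A (n - 1)) (A n)" using fh[of "n - 1"] n by simp
    have f2: "f n \<in> Hom C (A n) (A (Suc n))" using fh n by simp
    have c: "Cod C (f (n - 1)) = A n" "Dom C (f (n - 1)) = A (n - 1)" "Cod C (f n) = A (Suc n)"
      using f1 f2 unfolding Hom_def by auto
    have xf: "Comp C x (f n) \<in> Hom C (A n) D" using x f2 comp_hom by blast
    have "Comp C (Comp C x (f n)) (f (n - 1)) = Comp C x (Comp C (f n) (f (n - 1)))"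
      using assoc[OF f1 f2 x] by simp
    also have "\<dots> = Zero C (A (n - 1)) D" using ffz[OF n order_refl] comp_zero_r[OF x] f1 hom_obj by auto
    finally have z: "Comp C (Comp C x (f n)) (f (n - 1)) = Zero C (A (n - 1)) D" .
    from fck have "\<exists>!k. k \<in> Hom C (A (Suc n)) D \<and> Comp C x (f n) = Comp C k (f n)"
      unfolding cokernel_def using D xf z c by auto
    then show "x = y" using x y e by metis
  qed
  have epiB: "\<And>D x y. x \<in> Hom C (B (Suc n)) D \<Longrightarrow> y \<in> Hom C (B (Suc n)) D \<Longrightarrow>
      Comp C x (g n) = Comp C y (g n) \<Longrightarrow> x = y"
  proof -
    fix D x y assume x: "x \<in> Hom C (B (Suc n)) D" and y: "y \<in> Hom C (B (Suc n)) D"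
      and e: "Comp C x (g n) = Comp C y (g n)"
    have D: "D \<in> Obj C" using y hom_obj by blast
    have f1: "g (n - 1) \<in> Hom C (Y (n - 1)) (B n)" using gh[of "n - 1"] n by simp
    have f2: "g n \<in> Hom C (B n) (B (Suc n))" using ghk n by simp
    have c: "Cod C (g (n - 1)) = B n" "Dom C (g (n - 1)) = Y (n - 1)" "Cod C (g n) = B (Suc n)"
      using f1 f2 unfolding Hom_def by auto
    have xf: "Comp C x (g n) \<in> Hom C (B n) D" using x f2 comp_hom by blast
    have "Comp C (Comp C x (g n)) (g (n - 1)) = Comp C x (Comp C (g n) (g (n - 1)))"
      using assoc[OF f1 f2 x] by simp
    also have "\<dots> = Zero C (Y (n - 1)) D" using ggz[OF n order_refl] comp_zero_r[OF x] f1 hom_obj by auto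
    finally have z: "Comp C (Comp C x (g n)) (g (n - 1)) = Zero C (Y (n - 1)) D" .
    from gck have "\<exists>!k. k \<in> Hom C (B (Suc n)) D \<and> Comp C x (g n) = Comp C k (g n)"
      unfolding cokernel_def using D xf z c by auto
    then show "x = y" using x y e by metis
  qed
  have hh: "\<And>k. 1 \<le> k \<Longrightarrow> k \<le> Suc n \<Longrightarrow> h k \<in> Hom C (A k) (B k)" by (rule h_hom)
  have Wh: "\<And>k. 1 \<le> k \<Longrightarrow> k \<le> n \<Longrightarrow> W k \<in> Hom C (A k) (S k)"
  proof -
    fix k assume k: "1 \<le> k" "k \<le> n"
    note b = bp_homs[OF bip[OF k]]
    show "W k \<in> Hom C (A k) (S k)" unfolding W_def
      using b fh[of k] hh[of k] k by (intro plus_hom comp_hom neg_hom) auto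
  qed
  have pW: "\<And>k. 1 \<le> k \<Longrightarrow> k \<le> n \<Longrightarrow> Comp C (p1 k) (W k) = Neg C (f k) \<and> Comp C (p2 k) (W k) = h k"
  proof -
    fix k assume k: "1 \<le> k" "k \<le> n"
    have a: "Neg C (f k) \<in> Hom C (A k) (A (Suc k))" using fh k neg_hom by auto
    have b: "h k \<in> Hom C (A k) (B k)" using hh k by auto
    show "Comp C (p1 k) (W k) = Neg C (f k) \<and> Comp C (p2 k) (W k) = h k"
      unfolding W_def using bp_p_sum[OF bip[OF k] a b] by simp
  qed
  have u0: "u 0 = W 1" unfolding u_def W_def by simp
  have umid: "\<And>k. 1 \<le> k \<Longrightarrow> k < n \<Longrightarrow> u k = Plus C (Comp C (i1 (Suc k)) (Comp C (Neg C (f (Suc k))) (p1 k)))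
                          (Comp C (i2 (Suc k))
                             (Plus C (Comp C (h (Suc k)) (p1 k)) (Comp C (g k) (p2 k))))"
    unfolding u_def by simp
  have un: "u n = Plus C (Comp C (h (Suc n)) (p1 n)) (Comp C (g n) (p2 n))"
    unfolding u_def using n by simp
  have mid1: "\<And>k. 1 \<le> k \<Longrightarrow> k < n \<Longrightarrow> Comp C (Neg C (f (Suc k))) (p1 k) \<in> Hom C (S k) (A (Suc (Suc k)))"
  proof -
    fix k assume k: "1 \<le> k" "k < n"
    note b = bp_homs[OF bip[OF k(1)]]
    show "Comp C (Neg C (f (Suc k))) (p1 k) \<in> Hom C (S k) (A (Suc (Suc k)))"
      using b k fh[of "Suc k"] by (intro comp_hom neg_hom) auto
  qed
  have mid2: "\<And>k. 1 \<le> k \<Longrightarrow> k \<le> n \<Longrightarrow> Plus C (Comp C (h (Suc k)) (p1 k)) (Comp C (g k) (p2 k)) \<in> Hom C (S k) (B (Suc k))"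
  proof -
    fix k assume k: "1 \<le> k" "k \<le> n"
    note b = bp_homs[OF bip[OF k]]
    show "Plus C (Comp C (h (Suc k)) (p1 k)) (Comp C (g k) (p2 k)) \<in> Hom C (S k) (B (Suc k))"
      using b k hh[of "Suc k"] ghk[of k] by (intro plus_hom comp_hom) auto
  qed
  have ukh: "\<And>k. 1 \<le> k \<Longrightarrow> k < n \<Longrightarrow> u k \<in> Hom C (S k) (S (Suc k))"
  proof -
    fix k assume k: "1 \<le> k" "k < n"
    have bS: "is_biproduct C (A (Suc (Suc k))) (B (Suc k)) (S (Suc k)) (p1 (Suc k)) (p2 (Suc k)) (i1 (Suc k)) (i2 (Suc k))"
      using bip k by simp
    have m2: "Plus C (Comp C (h (Suc k)) (p1 k)) (Comp C (g k) (p2 k)) \<in> Hom C (S k) (B (Suc k))"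
      using mid2 k by simp
    show "u k \<in> Hom C (S k) (S (Suc k))" unfolding umid[OF k]
      by (rule plus_hom[OF comp_hom[OF mid1[OF k] bp_homs(4)[OF bS]] comp_hom[OF m2 bp_homs(5)[OF bS]]])
  qed
  have unh: "u n \<in> Hom C (S n) (B (Suc n))"
    unfolding un using mid2[OF n order_refl] by simp
  have uh: "\<And>k. k \<le> n \<Longrightarrow> u k \<in> Hom C (X k) (X (Suc k))"
  proof -
    fix k assume k: "k \<le> n"
    show "u k \<in> Hom C (X k) (X (Suc k))"
    proof (cases "k = 0")
      case True then show ?thesis unfolding X_def using u0 Wh[OF order_refl n] n by simp
    next
      case False
      show ?thesis
      proof (cases "k < n")
        case True then show ?thesis using ukh[of k] False unfolding X_def by simp
      next
        case False2: False
        then have "k = n" using k by simp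
        then show ?thesis using unh n unfolding X_def by simp
      qed
    qed
  qed
  have K1: "\<And>k. 1 \<le> k \<Longrightarrow> k < n \<Longrightarrow> Comp C (p1 (Suc k)) (u k) = Comp C (Neg C (f (Suc k))) (p1 k)
      \<and> Comp C (p2 (Suc k)) (u k) = Plus C (Comp C (h (Suc k)) (p1 k)) (Comp C (g k) (p2 k))"
  proof -
    fix k assume k: "1 \<le> k" "k < n"
    show "Comp C (p1 (Suc k)) (u k) = Comp C (Neg C (f (Suc k))) (p1 k)
      \<and> Comp C (p2 (Suc k)) (u k) = Plus C (Comp C (h (Suc k)) (p1 k)) (Comp C (g k) (p2 k))"
      unfolding umid[OF k] using bp_p_sum[OF bip[of "Suc k"] mid1[OF k] mid2[of k]] k by simp
  qed
  have K2: "\<And>k. 1 \<le> k \<Longrightarrow> k < n \<Longrightarrow> Comp C (u k) (i1 k) = W (Suc k) \<and> Comp C (u k) (i2 k) = Comp C (i2 (Suc k)) (g k)"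
  proof -
    fix k assume k: "1 \<le> k" "k < n"
    have bk: "is_biproduct C (A (Suc k)) (B k) (S k) (p1 k) (p2 k) (i1 k) (i2 k)"
      using bip k by simp
    have bS: "is_biproduct C (A (Suc (Suc k))) (B (Suc k)) (S (Suc k)) (p1 (Suc k)) (p2 (Suc k)) (i1 (Suc k)) (i2 (Suc k))"
      using bip k by simp
    note b = bp_homs[OF bk] and b' = bp_homs[OF bS]
    note e = bp_eqs[OF bk] and e' = bp_eqs[OF bS]
    have b'': "p1 (Suc k) \<in> Hom C (S (Suc k)) (A (Suc (Suc k)))" "p2 (Suc k) \<in> Hom C (S (Suc k)) (B (Suc k))"
      "i2 (Suc k) \<in> Hom C (B (Suc k)) (S (Suc k))" "S (Suc k) \<in> Obj C"
      using b' k by auto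
    have fS: "f (Suc k) \<in> Hom C (A (Suc k)) (A (Suc (Suc k)))" using fh k by simp
    have gk: "g k \<in> Hom C (B k) (B (Suc k))" using ghk k by simp
    have hS: "h (Suc k) \<in> Hom C (A (Suc k)) (B (Suc k))" using hh k by simp
    have uk: "u k \<in> Hom C (S k) (S (Suc k))" using ukh k by simp
    have K1k: "Comp C (p1 (Suc k)) (u k) = Comp C (Neg C (f (Suc k))) (p1 k)"
      "Comp C (p2 (Suc k)) (u k) = Plus C (Comp C (h (Suc k)) (p1 k)) (Comp C (g k) (p2 k))"
      using K1[OF k] by auto
    have pW': "Comp C (p1 (Suc k)) (W (Suc k)) = Neg C (f (Suc k))" "Comp C (p2 (Suc k)) (W (Suc k)) = h (Suc k)"
      using pW[of "Suc k"] k by auto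
    have WS: "W (Suc k) \<in> Hom C (A (Suc k)) (S (Suc k))" using Wh[of "Suc k"] k by simp
    have 1: "Comp C (u k) (i1 k) = W (Suc k)"
    proof (rule bp_ext_r[OF bS])
      show "Comp C (u k) (i1 k) \<in> Hom C (A (Suc k)) (S (Suc k))" using uk b comp_hom by blast
      show "W (Suc k) \<in> Hom C (A (Suc k)) (S (Suc k))" by (rule WS)
      have "Comp C (p1 (Suc k)) (Comp C (u k) (i1 k)) = Comp C (Comp C (p1 (Suc k)) (u k)) (i1 k)"
        using assoc[OF b(4) uk b''(1)] .
      also have "\<dots> = Comp C (Neg C (f (Suc k))) (Comp C (p1 k) (i1 k))"
        unfolding K1k using assoc[OF b(4) b(2) neg_hom[OF fS]] by simp
      also have "\<dots> = Neg C (f (Suc k))" using e id_r[OF neg_hom[OF fS]] by simp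
      finally show "Comp C (p1 (Suc k)) (Comp C (u k) (i1 k)) = Comp C (p1 (Suc k)) (W (Suc k))"
        using pW' by simp
      have "Comp C (p2 (Suc k)) (Comp C (u k) (i1 k)) = Comp C (Comp C (p2 (Suc k)) (u k)) (i1 k)"
        using assoc[OF b(4) uk b''(2)] .
      also have "\<dots> = h (Suc k)"
        unfolding K1k using bp_sum_i[OF bk hS gk] by simp
      finally show "Comp C (p2 (Suc k)) (Comp C (u k) (i1 k)) = Comp C (p2 (Suc k)) (W (Suc k))"
        using pW' by simp
    qed
    have 2: "Comp C (u k) (i2 k) = Comp C (i2 (Suc k)) (g k)"
    proof (rule bp_ext_r[OF bS])
      show "Comp C (u k) (i2 k) \<in> Hom C (B k) (S (Suc k))" using uk b comp_hom by blast
      show "Comp C (i2 (Suc k)) (g k) \<in> Hom C (B k) (S (Suc k))" using gk b''(3) comp_hom by blast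
      have "Comp C (p1 (Suc k)) (Comp C (u k) (i2 k)) = Comp C (Comp C (p1 (Suc k)) (u k)) (i2 k)"
        using assoc[OF b(5) uk b''(1)] .
      also have "\<dots> = Comp C (Neg C (f (Suc k))) (Comp C (p1 k) (i2 k))"
        unfolding K1k using assoc[OF b(5) b(2) neg_hom[OF fS]] by simp
      also have "\<dots> = Zero C (B k) (A (Suc (Suc k)))" using e comp_zero_r[OF neg_hom[OF fS]] b by simp
      also have "\<dots> = Comp C (Zero C (B (Suc k)) (A (Suc (Suc k)))) (g k)"
        using comp_zero_l[OF gk] fS hom_obj by metis
      also have "\<dots> = Comp C (p1 (Suc k)) (Comp C (i2 (Suc k)) (g k))"
        using assoc[OF gk b''(3) b''(1)] e' by simp
      finally show "Comp C (p1 (Suc k)) (Comp C (u k) (i2 k)) = Comp C (p1 (Suc k)) (Comp C (i2 (Suc k)) (g k))" .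
      have "Comp C (p2 (Suc k)) (Comp C (u k) (i2 k)) = Comp C (Comp C (p2 (Suc k)) (u k)) (i2 k)"
        using assoc[OF b(5) uk b''(2)] .
      also have "\<dots> = g k"
        unfolding K1k using bp_sum_i[OF bk hS gk] by simp
      also have "\<dots> = Comp C (p2 (Suc k)) (Comp C (i2 (Suc k)) (g k))"
        using assoc[OF gk b''(3) b''(2)] e' id_l[OF gk] by simp
      finally show "Comp C (p2 (Suc k)) (Comp C (u k) (i2 k)) = Comp C (p2 (Suc k)) (Comp C (i2 (Suc k)) (g k))" .
    qed
    show "Comp C (u k) (i1 k) = W (Suc k) \<and> Comp C (u k) (i2 k) = Comp C (i2 (Suc k)) (g k)"
      using 1 2 by simp
  qed
  have K3: "Comp C (u n) (i1 n) = h (Suc n) \<and> Comp C (u n) (i2 n) = g n"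
    unfolding un using bp_sum_i[OF bip[OF n order_refl] hh[of "Suc n"] ghk[OF n order_refl]] n by simp
  have HF: "\<And>k. 1 \<le> k \<Longrightarrow> k \<le> n \<Longrightarrow> Plus C (Comp C (h (Suc k)) (Neg C (f k))) (Comp C (g k) (h k)) = Zero C (A k) (B (Suc k))"
  proof -
    fix k assume k: "1 \<le> k" "k \<le> n"
    have fk: "f k \<in> Hom C (A k) (A (Suc k))" using fh k by simp
    have hS: "h (Suc k) \<in> Hom C (A (Suc k)) (B (Suc k))" using hh k by simp
    have gh': "Comp C (g k) (h k) \<in> Hom C (A k) (B (Suc k))" using hS fk comp_hom sq[OF k] by metis
    have "Comp C (h (Suc k)) (Neg C (f k)) = Neg C (Comp C (g k) (h k))"
      using neg_comp_r[OF fk hS] sq[OF k] by simp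
    then show "Plus C (Comp C (h (Suc k)) (Neg C (f k))) (Comp C (g k) (h k)) = Zero C (A k) (B (Suc k))"
      using plus_comm[OF neg_hom[OF gh'] gh'] plus_neg[OF gh'] by simp
  qed
  have uhS: "\<And>k. 1 \<le> k \<Longrightarrow> k \<le> n \<Longrightarrow> u k \<in> Hom C (S k) (X (Suc k))"
    using uh unfolding X_def by (metis not_one_le_zero)
  have K4: "\<And>k. 1 \<le> k \<Longrightarrow> k \<le> n \<Longrightarrow> Comp C (u k) (W k) = Zero C (A k) (X (Suc k))"
  proof -
    fix k assume k: "1 \<le> k" "k \<le> n"
    have bk: "is_biproduct C (A (Suc k)) (B k) (S k) (p1 k) (p2 k) (i1 k) (i2 k)"
      using bip k by simp
    note b = bp_homs[OF bk]
    have fk: "f k \<in> Hom C (A k) (A (Suc k))" using fh k by simp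
    have hS: "h (Suc k) \<in> Hom C (A (Suc k)) (B (Suc k))" using hh k by simp
    have gk: "g k \<in> Hom C (B k) (B (Suc k))" using ghk k by simp
    have Wk: "W k \<in> Hom C (A k) (S k)" using Wh k by simp
    have pWk: "Comp C (p1 k) (W k) = Neg C (f k)" "Comp C (p2 k) (W k) = h k" using pW k by auto
    have sumx: "Comp C (Plus C (Comp C (h (Suc k)) (p1 k)) (Comp C (g k) (p2 k))) (W k)
        = Zero C (A k) (B (Suc k))"
      using bp_sum_x[OF bk hS gk Wk] pWk HF[OF k] by simp
    show "Comp C (u k) (W k) = Zero C (A k) (X (Suc k))"
    proof (cases "k < n")
      case False
      then have "k = n" using k by simp
      then show ?thesis using sumx un unfolding X_def by simp
    next
      case True
      have bS: "is_biproduct C (A (Suc (Suc k))) (B (Suc k)) (S (Suc k)) (p1 (Suc k)) (p2 (Suc k)) (i1 (Suc k)) (i2 (Suc k))"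
        using bip k True by simp
      note b' = bp_homs[OF bS]
      have uk: "u k \<in> Hom C (S k) (S (Suc k))" using ukh k True by simp
      have fS: "f (Suc k) \<in> Hom C (A (Suc k)) (A (Suc (Suc k)))" using fh True by simp
      have XS: "X (Suc k) = S (Suc k)" unfolding X_def using True by simp
      have K1k: "Comp C (p1 (Suc k)) (u k) = Comp C (Neg C (f (Suc k))) (p1 k)"
        "Comp C (p2 (Suc k)) (u k) = Plus C (Comp C (h (Suc k)) (p1 k)) (Comp C (g k) (p2 k))"
        using K1[OF k(1) True] by auto
      have "Comp C (u k) (W k) = Zero C (A k) (S (Suc k))"
      proof (rule bp_ext_r[OF bS])
        show "Comp C (u k) (W k) \<in> Hom C (A k) (S (Suc k))" using Wk uk comp_hom by blast
        show "Zero C (A k) (S (Suc k)) \<in> Hom C (A k) (S (Suc k))" using b' Wk hom_obj zero_hom by blast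
        have "Comp C (p1 (Suc k)) (Comp C (u k) (W k)) = Comp C (Comp C (p1 (Suc k)) (u k)) (W k)"
          using assoc[OF Wk uk b'(2)] .
        also have "\<dots> = Comp C (Neg C (f (Suc k))) (Comp C (p1 k) (W k))"
          unfolding K1k using assoc[OF Wk b(2) neg_hom[OF fS]] by simp
        also have "\<dots> = Comp C (f (Suc k)) (f k)" using pWk neg_neg_comp[OF fk fS] by simp
        also have "\<dots> = Zero C (A k) (A (Suc (Suc k)))" using ffz[of "Suc k"] True by simp
        also have "\<dots> = Comp C (p1 (Suc k)) (Zero C (A k) (S (Suc k)))"
          using comp_zero_r[OF b'(2)] Wk hom_obj by metis
        finally show "Comp C (p1 (Suc k)) (Comp C (u k) (W k)) = Comp C (p1 (Suc k)) (Zero C (A k) (S (Suc k)))" .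
        have "Comp C (p2 (Suc k)) (Comp C (u k) (W k)) = Comp C (Comp C (p2 (Suc k)) (u k)) (W k)"
          using assoc[OF Wk uk b'(3)] .
        also have "\<dots> = Zero C (A k) (B (Suc k))" unfolding K1k by (rule sumx)
        also have "\<dots> = Comp C (p2 (Suc k)) (Zero C (A k) (S (Suc k)))"
          using comp_zero_r[OF b'(3)] Wk hom_obj by metis
        finally show "Comp C (p2 (Suc k)) (Comp C (u k) (W k)) = Comp C (p2 (Suc k)) (Zero C (A k) (S (Suc k)))" .
      qed
      then show ?thesis using XS by simp
    qed
  qed
  have K5: "\<And>k. 2 \<le> k \<Longrightarrow> k \<le> n \<Longrightarrow> Comp C (u k) (Comp C (i2 k) (g (k - 1))) = Zero C (B (k - 1)) (X (Suc k))"
  proof -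
    fix k assume k: "2 \<le> k" "k \<le> n"
    have bk: "is_biproduct C (A (Suc k)) (B k) (S k) (p1 k) (p2 k) (i1 k) (i2 k)"
      using bip k by simp
    note b = bp_homs[OF bk]
    have gk: "g k \<in> Hom C (B k) (B (Suc k))" using ghk k by simp
    have gj: "g (k - 1) \<in> Hom C (B (k - 1)) (B k)" using ghk[of "k - 1"] k by simp
    have Yj: "Y (k - 1) = B (k - 1)" unfolding Y_def using k by simp
    have gg: "Comp C (g k) (g (k - 1)) = Zero C (B (k - 1)) (B (Suc k))" using ggz[of k] k Yj by simp
    have uk: "u k \<in> Hom C (S k) (X (Suc k))" using uhS k by simp
    have "Comp C (u k) (Comp C (i2 k) (g (k - 1))) = Comp C (Comp C (u k) (i2 k)) (g (k - 1))"
      using assoc[OF gj b(5) uk] .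
    also have "\<dots> = Zero C (B (k - 1)) (X (Suc k))"
    proof (cases "k < n")
      case True
      have bS: "is_biproduct C (A (Suc (Suc k))) (B (Suc k)) (S (Suc k)) (p1 (Suc k)) (p2 (Suc k)) (i1 (Suc k)) (i2 (Suc k))"
        using bip k True by simp
      have XS: "X (Suc k) = S (Suc k)" unfolding X_def using True by simp
      have "Comp C (Comp C (u k) (i2 k)) (g (k - 1)) = Comp C (Comp C (i2 (Suc k)) (g k)) (g (k - 1))"
        using K2[of k] k True by simp
      also have "\<dots> = Comp C (i2 (Suc k)) (Comp C (g k) (g (k - 1)))"
        using assoc[OF gj gk bp_homs(5)[OF bS]] by simp
      also have "\<dots> = Zero C (B (k - 1)) (S (Suc k))"
        using gg comp_zero_r[OF bp_homs(5)[OF bS]] gj hom_obj by metis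
      finally show ?thesis using XS by simp
    next
      case False
      then have "k = n" using k by simp
      then show ?thesis using K3 gg unfolding X_def by simp
    qed
    finally show "Comp C (u k) (Comp C (i2 k) (g (k - 1))) = Zero C (B (k - 1)) (X (Suc k))" .
  qed
  have Z: "\<And>k. 1 \<le> k \<Longrightarrow> k \<le> n \<Longrightarrow> Comp C (u k) (u (k - 1)) = Zero C (X (k - 1)) (X (Suc k))"
  proof -
    fix k assume k: "1 \<le> k" "k \<le> n"
    show "Comp C (u k) (u (k - 1)) = Zero C (X (k - 1)) (X (Suc k))"
    proof (cases "k = 1")
      case True
      then show ?thesis using K4[OF order_refl n] u0 unfolding X_def by simp
    next
      case False
      define j where "j = k - 1"
      have j: "1 \<le> j" "j < n" "k = Suc j" using k False unfolding j_def by auto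
      have bj: "is_biproduct C (A (Suc j)) (B j) (S j) (p1 j) (p2 j) (i1 j) (i2 j)"
        using bip j by simp
      note b = bp_homs[OF bj]
      have uk: "u k \<in> Hom C (S k) (X (Suc k))" using uhS k by simp
      have uj: "u j \<in> Hom C (S j) (S k)" using ukh j by simp
      have Xj: "X (k - 1) = S j" unfolding X_def j_def using j by simp
      have XSk: "X (Suc k) \<in> Obj C" using Xobj k by simp
      have "Comp C (u k) (u j) = Zero C (S j) (X (Suc k))"
      proof (rule bp_ext_l[OF bj])
        show "Comp C (u k) (u j) \<in> Hom C (S j) (X (Suc k))" using uk uj comp_hom by blast
        show "Zero C (S j) (X (Suc k)) \<in> Hom C (S j) (X (Suc k))" using b XSk zero_hom by blast
        have "Comp C (Comp C (u k) (u j)) (i1 j) = Comp C (u k) (Comp C (u j) (i1 j))"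
          using assoc[OF b(4) uj uk] by simp
        also have "\<dots> = Comp C (u k) (W k)" using K2[OF j(1,2)] j by simp
        also have "\<dots> = Zero C (A k) (X (Suc k))" using K4 k by simp
        also have "\<dots> = Comp C (Zero C (S j) (X (Suc k))) (i1 j)" using comp_zero_l[OF b(4) XSk] j by simp
        finally show "Comp C (Comp C (u k) (u j)) (i1 j) = Comp C (Zero C (S j) (X (Suc k))) (i1 j)" .
        have "Comp C (Comp C (u k) (u j)) (i2 j) = Comp C (u k) (Comp C (u j) (i2 j))"
          using assoc[OF b(5) uj uk] by simp
        also have "\<dots> = Comp C (u k) (Comp C (i2 k) (g (k - 1)))" using K2[OF j(1,2)] j by simp
        also have "\<dots> = Zero C (B j) (X (Suc k))" using K5[of k] k False j by simp
        also have "\<dots> = Comp C (Zero C (S j) (X (Suc k))) (i2 j)" using comp_zero_l[OF b(5) XSk] by simp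
        finally show "Comp C (Comp C (u k) (u j)) (i2 j) = Comp C (Zero C (S j) (X (Suc k))) (i2 j)" .
      qed
      then show ?thesis using Xj j_def by simp
    qed
  qed
  have AB: "\<And>k D \<phi>. 1 \<le> k \<Longrightarrow> k \<le> n \<Longrightarrow> \<phi> \<in> Hom C (S k) D \<Longrightarrow> Comp C \<phi> (u (k - 1)) = Zero C (X (k - 1)) D \<Longrightarrow>
     Comp C (Comp C \<phi> (i2 k)) (h k) = Comp C (Comp C \<phi> (i1 k)) (f k)
     \<and> Comp C (Comp C \<phi> (i2 k)) (g (k - 1)) = Zero C (Y (k - 1)) D"
  proof -
    fix k D \<phi> assume k: "1 \<le> k" "k \<le> n" and ph: "\<phi> \<in> Hom C (S k) D"
      and z: "Comp C \<phi> (u (k - 1)) = Zero C (X (k - 1)) D"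
    have bk: "is_biproduct C (A (Suc k)) (B k) (S k) (p1 k) (p2 k) (i1 k) (i2 k)"
      using bip k by simp
    note b = bp_homs[OF bk]
    have D: "D \<in> Obj C" using ph hom_obj by blast
    have fk: "f k \<in> Hom C (A k) (A (Suc k))" using fh k by simp
    have hk: "h k \<in> Hom C (A k) (B k)" using hh k by simp
    have a: "Comp C \<phi> (i1 k) \<in> Hom C (A (Suc k)) D" using ph b comp_hom by blast
    have bb: "Comp C \<phi> (i2 k) \<in> Hom C (B k) D" using ph b comp_hom by blast
    have al: "Comp C \<phi> (W k) = Zero C (A k) D"
    proof (cases "k = 1")
      case True
      then show ?thesis using z u0 unfolding X_def by simp
    next
      case False
      define j where "j = k - 1"
      have j: "1 \<le> j" "j < n" "k = Suc j" using k False unfolding j_def by auto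
      have bj: "is_biproduct C (A (Suc j)) (B j) (S j) (p1 j) (p2 j) (i1 j) (i2 j)"
        using bip j by simp
      have uj: "u j \<in> Hom C (S j) (S k)" using ukh j by simp
      have "Comp C \<phi> (W k) = Comp C \<phi> (Comp C (u j) (i1 j))" using K2[OF j(1,2)] j by simp
      also have "\<dots> = Comp C (Comp C \<phi> (u j)) (i1 j)" using assoc[OF bp_homs(4)[OF bj] uj ph] .
      also have "\<dots> = Comp C (Zero C (S j) D) (i1 j)" using z j unfolding X_def j_def by simp
      also have "\<dots> = Zero C (A k) D" using comp_zero_l[OF bp_homs(4)[OF bj] D] j by simp
      finally show ?thesis .
    qed
    have "Comp C \<phi> (W k) = Plus C (Comp C (Comp C \<phi> (i1 k)) (Neg C (f k))) (Comp C (Comp C \<phi> (i2 k)) (h k))"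
      unfolding W_def by (rule bp_phi_sum[OF bk ph neg_hom[OF fk] hk])
    then have "Plus C (Neg C (Comp C (Comp C \<phi> (i1 k)) (f k))) (Comp C (Comp C \<phi> (i2 k)) (h k)) = Zero C (A k) D"
      using al neg_comp_r[OF fk a] by simp
    then have "Comp C (Comp C \<phi> (i2 k)) (h k) = Neg C (Neg C (Comp C (Comp C \<phi> (i1 k)) (f k)))"
      using neg_unique neg_hom comp_hom[OF fk a] comp_hom[OF hk bb] by blast
    then have 1: "Comp C (Comp C \<phi> (i2 k)) (h k) = Comp C (Comp C \<phi> (i1 k)) (f k)"
      using neg_neg[OF comp_hom[OF fk a]] by simp
    have 2: "Comp C (Comp C \<phi> (i2 k)) (g (k - 1)) = Zero C (Y (k - 1)) D"
    proof (cases "k = 1")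
      case True
      have f0: "f 0 \<in> Hom C (A 0) (A 1)" using fh by simp
      have f1: "f 1 \<in> Hom C (A 1) (A 2)" using fh n by (simp add: numeral_2_eq_2)
      have h1: "h 1 \<in> Hom C (A 1) (B 1)" using hh n by simp
      have a1: "Comp C \<phi> (i1 1) \<in> Hom C (A 2) D" using a True by (simp add: numeral_2_eq_2)
      have b1: "Comp C \<phi> (i2 1) \<in> Hom C (B 1) D" using bb True by simp
      have "Comp C (Comp C \<phi> (i2 1)) (g 0) = Comp C (Comp C (Comp C \<phi> (i2 1)) (h 1)) (f 0)"
        unfolding sq0 using assoc[OF f0 h1 b1] .
      also have "\<dots> = Comp C (Comp C (Comp C \<phi> (i1 1)) (f 1)) (f 0)" using 1 True by simp
      also have "\<dots> = Comp C (Comp C \<phi> (i1 1)) (Comp C (f 1) (f 0))" using assoc[OF f0 f1 a1] by simp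
      also have "\<dots> = Zero C (A 0) D" using ffz[OF order_refl n] comp_zero_r[OF a1] f0 hom_obj
        by (simp add: numeral_2_eq_2)
      finally show ?thesis using True unfolding Y_def by simp
    next
      case False
      define j where "j = k - 1"
      have j: "1 \<le> j" "j < n" "k = Suc j" using k False unfolding j_def by auto
      have bj: "is_biproduct C (A (Suc j)) (B j) (S j) (p1 j) (p2 j) (i1 j) (i2 j)"
        using bip j by simp
      have uj: "u j \<in> Hom C (S j) (S k)" using ukh j by simp
      have gj: "g j \<in> Hom C (B j) (B k)" using ghk j by simp
      have "Comp C (Comp C \<phi> (i2 k)) (g j) = Comp C \<phi> (Comp C (i2 k) (g j))"
        using assoc[OF gj b(5) ph] by simp
      also have "\<dots> = Comp C \<phi> (Comp C (u j) (i2 j))" using K2[OF j(1,2)] j by simp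
      also have "\<dots> = Comp C (Comp C \<phi> (u j)) (i2 j)" using assoc[OF bp_homs(5)[OF bj] uj ph] .
      also have "\<dots> = Comp C (Zero C (S j) D) (i2 j)" using z j unfolding X_def j_def by simp
      also have "\<dots> = Zero C (B j) D" using comp_zero_l[OF bp_homs(5)[OF bj] D] by simp
      finally show ?thesis unfolding Y_def j_def using j by simp
    qed
    show "Comp C (Comp C \<phi> (i2 k)) (h k) = Comp C (Comp C \<phi> (i1 k)) (f k)
     \<and> Comp C (Comp C \<phi> (i2 k)) (g (k - 1)) = Zero C (Y (k - 1)) D" using 1 2 by simp
  qed
  have WC: "\<And>k. 1 \<le> k \<Longrightarrow> k < n \<Longrightarrow> weak_cokernel C (u (k - 1)) (u k)"
  proof -
    fix k assume k: "1 \<le> k" "k < n"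
    have bk: "is_biproduct C (A (Suc k)) (B k) (S k) (p1 k) (p2 k) (i1 k) (i2 k)"
      using bip k by simp
    have bS: "is_biproduct C (A (Suc (Suc k))) (B (Suc k)) (S (Suc k)) (p1 (Suc k)) (p2 (Suc k)) (i1 (Suc k)) (i2 (Suc k))"
      using bip k by simp
    note b = bp_homs[OF bk] and b' = bp_homs[OF bS]
    have up: "u (k - 1) \<in> Hom C (X (k - 1)) (S k)" using uh[of "k - 1"] k unfolding X_def by auto
    have uk: "u k \<in> Hom C (S k) (S (Suc k))" using ukh k by simp
    have XS: "X (Suc k) = S (Suc k)" unfolding X_def using k by simp
    have dc: "Dom C (u (k - 1)) = X (k - 1)" "Cod C (u (k - 1)) = S k" "Dom C (u k) = S k" "Cod C (u k) = S (Suc k)"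
      "u (k - 1) \<in> Mor C" "u k \<in> Mor C" using up uk unfolding Hom_def by auto
    have zz: "Comp C (u k) (u (k - 1)) = Zero C (X (k - 1)) (S (Suc k))" using Z[of k] k XS by simp
    have fk: "f k \<in> Hom C (A k) (A (Suc k))" using fh k by simp
    have fS: "f (Suc k) \<in> Hom C (A (Suc k)) (A (Suc (Suc k)))" using fh k by simp
    have hk: "h k \<in> Hom C (A k) (B k)" using hh k by simp
    have hS: "h (Suc k) \<in> Hom C (A (Suc k)) (B (Suc k))" using hh k by simp
    have gk: "g k \<in> Hom C (B k) (B (Suc k))" using ghk k by simp
    have fac: "\<exists>\<psi> \<in> Hom C (S (Suc k)) D. \<phi> = Comp C \<psi> (u k)"
      if D: "D \<in> Obj C" and ph: "\<phi> \<in> Hom C (S k) D" and z: "Comp C \<phi> (u (k - 1)) = Zero C (X (k - 1)) D" for D \<phi>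
    proof -
      define a where "a = Comp C \<phi> (i1 k)"
      define bb where "bb = Comp C \<phi> (i2 k)"
      have a: "a \<in> Hom C (A (Suc k)) D" unfolding a_def using ph b comp_hom by blast
      have bbh: "bb \<in> Hom C (B k) D" unfolding bb_def using ph b comp_hom by blast
      have ab: "Comp C bb (h k) = Comp C a (f k)" "Comp C bb (g (k - 1)) = Zero C (Y (k - 1)) D"
        using AB[OF k(1) _ ph z] k unfolding a_def bb_def by auto
      obtain e where e: "e \<in> Hom C (B (Suc k)) D" "bb = Comp C e (g k)"
        using facB[OF k(1) _ bbh ab(2)] k by auto
      define eh where "eh = Comp C e (h (Suc k))"
      have ehh: "eh \<in> Hom C (A (Suc k)) D" unfolding eh_def using hS e comp_hom by blast
      have af: "Comp C a (f k) = Comp C eh (f k)"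
      proof -
        have "Comp C a (f k) = Comp C (Comp C e (g k)) (h k)" using ab e by simp
        also have "\<dots> = Comp C e (Comp C (g k) (h k))" using assoc[OF hk gk e(1)] by simp
        also have "\<dots> = Comp C e (Comp C (h (Suc k)) (f k))" using sq[of k] k by simp
        also have "\<dots> = Comp C eh (f k)" unfolding eh_def using assoc[OF fk hS e(1)] .
        finally show ?thesis .
      qed
      define y where "y = Plus C a (Neg C eh)"
      have yh: "y \<in> Hom C (A (Suc k)) D" unfolding y_def using a ehh plus_hom neg_hom by blast
      have yf: "Comp C y (f (Suc k - 1)) = Zero C (A (Suc k - 1)) D"
      proof -
        have "Comp C y (f k) = Plus C (Comp C a (f k)) (Comp C (Neg C eh) (f k))"
          unfolding y_def using comp_plus_l[OF fk a neg_hom[OF ehh]] .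
        also have "\<dots> = Plus C (Comp C a (f k)) (Neg C (Comp C a (f k)))" using neg_comp_l[OF fk ehh] af by simp
        also have "\<dots> = Zero C (A k) D" using plus_neg[OF comp_hom[OF fk a]] .
        finally show ?thesis by simp
      qed
      obtain c where c: "c \<in> Hom C (A (Suc (Suc k))) D" "y = Comp C c (f (Suc k))"
        using facT[of "Suc k" y D] k yh yf by auto
      define \<psi> where "\<psi> = Plus C (Comp C (Neg C c) (p1 (Suc k))) (Comp C e (p2 (Suc k)))"
      have psh: "\<psi> \<in> Hom C (S (Suc k)) D" unfolding \<psi>_def
        using plus_hom[OF comp_hom[OF b'(2) neg_hom[OF c(1)]] comp_hom[OF b'(3) e(1)]] .
      have psi: "Comp C \<psi> (i1 (Suc k)) = Neg C c" "Comp C \<psi> (i2 (Suc k)) = e"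
        unfolding \<psi>_def using bp_sum_i[OF bS neg_hom[OF c(1)] e(1)] by auto
      have "\<phi> = Comp C \<psi> (u k)"
      proof (rule bp_ext_l[OF bk ph])
        show "Comp C \<psi> (u k) \<in> Hom C (S k) D" using uk psh comp_hom by blast
        have "Comp C (Comp C \<psi> (u k)) (i1 k) = Comp C \<psi> (Comp C (u k) (i1 k))"
          using assoc[OF b(4) uk psh] by simp
        also have "\<dots> = Comp C \<psi> (W (Suc k))" using K2[OF k] by simp
        also have "\<dots> = Plus C (Comp C (Neg C c) (Neg C (f (Suc k)))) (Comp C e (h (Suc k)))"
          unfolding W_def using bp_phi_sum[OF bS psh neg_hom[OF fS] hS] psi by simp
        also have "\<dots> = Plus C y eh" unfolding eh_def using neg_neg_comp[OF fS c(1)] c by simp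
        also have "\<dots> = a" unfolding y_def using plus_neg_cancel[OF a ehh] .
        finally show "Comp C \<phi> (i1 k) = Comp C (Comp C \<psi> (u k)) (i1 k)" unfolding a_def by simp
        have "Comp C (Comp C \<psi> (u k)) (i2 k) = Comp C \<psi> (Comp C (u k) (i2 k))"
          using assoc[OF b(5) uk psh] by simp
        also have "\<dots> = Comp C \<psi> (Comp C (i2 (Suc k)) (g k))" using K2[OF k] by simp
        also have "\<dots> = Comp C e (g k)" using assoc[OF gk b'(5) psh] psi by simp
        also have "\<dots> = bb" using e by simp
        finally show "Comp C \<phi> (i2 k) = Comp C (Comp C \<psi> (u k)) (i2 k)" unfolding bb_def by simp
      qed
      then show ?thesis using psh by blast
    qed
    show "weak_cokernel C (u (k - 1)) (u k)"
      unfolding weak_cokernel_def using dc zz fac by auto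
  qed
  have CK: "cokernel C (u (n - 1)) (u n)"
  proof -
    have bk: "is_biproduct C (A (Suc n)) (B n) (S n) (p1 n) (p2 n) (i1 n) (i2 n)"
      using bip n by simp
    note b = bp_homs[OF bk]
    have up: "u (n - 1) \<in> Hom C (X (n - 1)) (S n)" using uh[of "n - 1"] n unfolding X_def by auto
    have XS: "X (Suc n) = B (Suc n)" unfolding X_def by simp
    have dc: "Dom C (u (n - 1)) = X (n - 1)" "Cod C (u (n - 1)) = S n" "Dom C (u n) = S n" "Cod C (u n) = B (Suc n)"
      "u (n - 1) \<in> Mor C" "u n \<in> Mor C" using up unh unfolding Hom_def by auto
    have zz: "Comp C (u n) (u (n - 1)) = Zero C (X (n - 1)) (B (Suc n))" using Z[OF n order_refl] XS by simp
    have fk: "f n \<in> Hom C (A n) (A (Suc n))" using fh by simp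
    have hk: "h n \<in> Hom C (A n) (B n)" using hh n by simp
    have hS: "h (Suc n) \<in> Hom C (A (Suc n)) (B (Suc n))" using hh n by simp
    have gk: "g n \<in> Hom C (B n) (B (Suc n))" using ghk n by simp
    have fac: "\<exists>!\<psi>. \<psi> \<in> Hom C (B (Suc n)) D \<and> \<phi> = Comp C \<psi> (u n)"
      if D: "D \<in> Obj C" and ph: "\<phi> \<in> Hom C (S n) D" and z: "Comp C \<phi> (u (n - 1)) = Zero C (X (n - 1)) D" for D \<phi>
    proof -
      define a where "a = Comp C \<phi> (i1 n)"
      define bb where "bb = Comp C \<phi> (i2 n)"
      have a: "a \<in> Hom C (A (Suc n)) D" unfolding a_def using ph b comp_hom by blast
      have bbh: "bb \<in> Hom C (B n) D" unfolding bb_def using ph b comp_hom by blast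
      have ab: "Comp C bb (h n) = Comp C a (f n)" "Comp C bb (g (n - 1)) = Zero C (Y (n - 1)) D"
        using AB[OF n order_refl ph z] unfolding a_def bb_def by auto
      obtain e where e: "e \<in> Hom C (B (Suc n)) D" "bb = Comp C e (g n)"
        using facB[OF n order_refl bbh ab(2)] by auto
      define eh where "eh = Comp C e (h (Suc n))"
      have ehh: "eh \<in> Hom C (A (Suc n)) D" unfolding eh_def using hS e comp_hom by blast
      have af: "Comp C a (f n) = Comp C eh (f n)"
      proof -
        have "Comp C a (f n) = Comp C (Comp C e (g n)) (h n)" using ab e by simp
        also have "\<dots> = Comp C e (Comp C (g n) (h n))" using assoc[OF hk gk e(1)] by simp
        also have "\<dots> = Comp C e (Comp C (h (Suc n)) (f n))" using sq[of n] n by simp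
        also have "\<dots> = Comp C eh (f n)" unfolding eh_def using assoc[OF fk hS e(1)] .
        finally show ?thesis .
      qed
      have aeh: "a = eh" using epiT[OF a ehh af] .
      have ex: "\<phi> = Comp C e (u n)"
      proof (rule bp_ext_l[OF bk ph])
        show "Comp C e (u n) \<in> Hom C (S n) D" using unh e comp_hom by blast
        have "Comp C (Comp C e (u n)) (i1 n) = Comp C e (Comp C (u n) (i1 n))"
          using assoc[OF b(4) unh e(1)] by simp
        also have "\<dots> = a" using K3 aeh unfolding eh_def by simp
        finally show "Comp C \<phi> (i1 n) = Comp C (Comp C e (u n)) (i1 n)" unfolding a_def by simp
        have "Comp C (Comp C e (u n)) (i2 n) = Comp C e (Comp C (u n) (i2 n))"
          using assoc[OF b(5) unh e(1)] by simp
        also have "\<dots> = bb" using K3 e by simp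
        finally show "Comp C \<phi> (i2 n) = Comp C (Comp C e (u n)) (i2 n)" unfolding bb_def by simp
      qed
      show ?thesis
      proof (rule ex1I[of _ e])
        show "e \<in> Hom C (B (Suc n)) D \<and> \<phi> = Comp C e (u n)" using e ex by simp
        fix k1 assume k1: "k1 \<in> Hom C (B (Suc n)) D \<and> \<phi> = Comp C k1 (u n)"
        have "Comp C k1 (g n) = Comp C k1 (Comp C (u n) (i2 n))" using K3 by simp
        also have "\<dots> = Comp C \<phi> (i2 n)" using assoc[OF b(5) unh conjunct1[OF k1]] conjunct2[OF k1] by simp
        also have "\<dots> = Comp C e (g n)" using e unfolding bb_def by simp
        finally show "k1 = e" using epiB k1 e(1) by blast
      qed
    qed
    show ?thesis unfolding cokernel_def using dc zz fac by auto
  qed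
  have "right_n_exact C n X u"
    unfolding right_n_exact_def using n Xobj uh WC CK by auto
  then show ?thesis unfolding X_def u_def .
qed
end
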